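(* Let $R$ be a commutative ring with identity and $n$ a positive integer. If $R[X]_A$ satisfies the ascending chain condition on $n$-generated ideals, then so does $R$.
   Context: $X$ is an indeterminate over $R$, $A=\{f\in R[X]\mid f(0)=1\}$, and $R[X]_A$ is the localization of $R[X]$ at $A$. An ideal is $n$-generated if it is generated by $n$ elements; a ring satisfies the $n$-ascending chain condition if every ascending chain of $n$-generated ideals stabilizes. *)

theory Defs
  imports "HOL-Computational_Algebra.Polynomial"
begin

definition n_generated_ideal :: "nat \<Rightarrow> 'a::comm_ring_1 set \<Rightarrow> bool" where
  "n_generated_ideal n I \<longleftrightarrow> (\<exists>g::nat \<Rightarrow> 'a. I = {\<Sum>i<n. r i * g i | r. True})"

definition n_acc :: "nat \<Rightarrow> 'a::comm_ring_1 itself \<Rightarrow> bool" where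
  "n_acc n _ \<longleftrightarrow>
     (\<forall>I :: nat \<Rightarrow> 'a set. (\<forall>k. n_generated_ideal n (I k)) \<and> (\<forall>k. I k \<subseteq> I (Suc k))
        \<longrightarrow> (\<exists>N. \<forall>m\<ge>N. I m = I N))"

definition locA :: "'a::comm_ring_1 poly set" where
  "locA = {f. poly f 0 = 1}"

lemma locA_mult: "s \<in> locA \<Longrightarrow> t \<in> locA \<Longrightarrow> s * t \<in> locA"
  by (simp add: locA_def)

lemma locA_1: "1 \<in> locA"
  by (simp add: locA_def)

definition locrel :: "'a::comm_ring_1 poly \<times> 'a poly \<Rightarrow> 'a poly \<times> 'a poly \<Rightarrow> bool" where
  "locrel x y \<longleftrightarrow> snd x \<in> locA \<and> snd y \<in> locA \<and>
     (\<exists>u\<in>locA. u * (fst x * snd y - fst y * snd x) = 0)"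

lemma locrel_refl: "s \<in> locA \<Longrightarrow> locrel (f, s) (f, s)"
  unfolding locrel_def using locA_1 by auto

lemma locrel_sym: "locrel x y \<Longrightarrow> locrel y x"
  unfolding locrel_def
proof (elim conjE bexE, intro conjI)
  fix u assume "u \<in> locA" "u * (fst x * snd y - fst y * snd x) = 0"
  then show "\<exists>u\<in>locA. u * (fst y * snd x - fst x * snd y) = 0"
    by (intro bexI[of _ u]) (auto simp: algebra_simps)
qed

lemma locrel_trans:
  assumes "locrel x y" "locrel y z" shows "locrel x z"
proof -
  obtain f s g t h r where xyz: "x = (f, s)" "y = (g, t)" "z = (h, r)"
    by (metis prod.collapse)
  from assms obtain u v where u: "u \<in> locA" "u * (f * t - g * s) = 0"
    and v: "v \<in> locA" "v * (g * r - h * t) = 0" and st: "s \<in> locA" "t \<in> locA" "r \<in> locA"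
    by (auto simp: locrel_def xyz)
  have "u * v * t * (f * r - h * s) = v * r * (u * (f * t - g * s)) + u * s * (v * (g * r - h * t))"
    by (simp add: algebra_simps)
  also have "\<dots> = 0" using u v by simp
  finally show ?thesis
    using st u v by (auto simp: locrel_def xyz intro!: bexI[of _ "u * v * t"] locA_mult)
qed

lemma part_equivp_locrel: "part_equivp locrel"
proof (rule part_equivpI)
  show "\<exists>x. locrel x x" using locrel_refl[OF locA_1] by blast
  show "symp locrel" by (auto intro: sympI locrel_sym)
  show "transp locrel" by (auto intro: transpI locrel_trans)
qed

quotient_type (overloaded) 'a loc = "'a::comm_ring_1 poly \<times> 'a poly" / partial: locrel
  by (rule part_equivp_locrel)

text \<open>Elements of 'a loc are the fractions f / s with f in R[X] and s in A, i.e. R[X]_A.\<close>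

lemma locrel_pairI:
  assumes "s \<in> locA" "t \<in> locA" "u \<in> locA" "u * (f * t - g * s) = 0"
  shows "locrel (f, s) (g, t)"
  using assms unfolding locrel_def by auto

lemma locrel_pairE:
  assumes "locrel (f, s) (g, t)"
  obtains u where "s \<in> locA" "t \<in> locA" "u \<in> locA" "u * (f * t - g * s) = 0"
  using assms unfolding locrel_def by auto

lemma plus_resp:
  assumes "locrel (f, s) (f', s')" "locrel (g, t) (g', t')"
  shows "locrel (f * t + g * s, s * t) (f' * t' + g' * s', s' * t')"
proof -
  from assms obtain u v where u: "u \<in> locA" "u * (f * s' - f' * s) = 0"
    and v: "v \<in> locA" "v * (g * t' - g' * t) = 0"
    and m: "s \<in> locA" "s' \<in> locA" "t \<in> locA" "t' \<in> locA"
    by (metis locrel_pairE)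
  have "u * v * ((f * t + g * s) * (s' * t') - (f' * t' + g' * s') * (s * t))
        = v * t * t' * (u * (f * s' - f' * s)) + u * s * s' * (v * (g * t' - g' * t))"
    by (simp add: algebra_simps)
  also have "\<dots> = 0" using u v by simp
  finally show ?thesis
    using u v m by (intro locrel_pairI locA_mult) (auto intro: locA_mult)
qed

lemma times_resp:
  assumes "locrel (f, s) (f', s')" "locrel (g, t) (g', t')"
  shows "locrel (f * g, s * t) (f' * g', s' * t')"
proof -
  from assms obtain u v where u: "u \<in> locA" "u * (f * s' - f' * s) = 0"
    and v: "v \<in> locA" "v * (g * t' - g' * t) = 0"
    and m: "s \<in> locA" "s' \<in> locA" "t \<in> locA" "t' \<in> locA"
    by (metis locrel_pairE)
  have "u * v * ((f * g) * (s' * t') - (f' * g') * (s * t))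
        = v * g * t' * (u * (f * s' - f' * s)) + u * f' * s * (v * (g * t' - g' * t))"
    by (simp add: algebra_simps)
  also have "\<dots> = 0" using u v by simp
  finally show ?thesis
    using u v m by (intro locrel_pairI locA_mult) (auto intro: locA_mult)
qed

lemma uminus_resp:
  assumes "locrel (f, s) (f', s')"
  shows "locrel (- f, s) (- f', s')"
proof -
  from assms obtain u where u: "u \<in> locA" "u * (f * s' - f' * s) = 0"
    and m: "s \<in> locA" "s' \<in> locA" by (metis locrel_pairE)
  have "u * (- f * s' - - f' * s) = - (u * (f * s' - f' * s))" by (simp add: algebra_simps)
  then show ?thesis using u m by (intro locrel_pairI) auto
qed

lemma locrel_eqI:
  assumes "s \<in> locA" "t \<in> locA" "f * t = g * s"
  shows "locrel (f, s) (g, t)"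
  using assms by (intro locrel_pairI[where u=1]) (auto simp: locA_1)

instantiation loc :: (comm_ring_1) comm_ring_1
begin

lift_definition zero_loc :: "'a loc" is "(0, 1)"
  by (rule locrel_refl[OF locA_1])

lift_definition one_loc :: "'a loc" is "(1, 1)"
  by (rule locrel_refl[OF locA_1])

lift_definition plus_loc :: "'a loc \<Rightarrow> 'a loc \<Rightarrow> 'a loc"
  is "\<lambda>(f, s) (g, t). (f * t + g * s, s * t)"
  by (clarsimp, rule plus_resp)

lift_definition times_loc :: "'a loc \<Rightarrow> 'a loc \<Rightarrow> 'a loc"
  is "\<lambda>(f, s) (g, t). (f * g, s * t)"
  by (clarsimp, rule times_resp)

lift_definition uminus_loc :: "'a loc \<Rightarrow> 'a loc"
  is "\<lambda>(f, s). (- f, s)"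
  by (clarsimp, rule uminus_resp)

definition minus_loc :: "'a loc \<Rightarrow> 'a loc \<Rightarrow> 'a loc" where
  "minus_loc x y = x + - y"

instance
proof
  fix a b c :: "'a loc"
  show "a * b * c = a * (b * c)"
    by transfer (auto intro!: locrel_eqI locA_mult simp: locrel_def algebra_simps)
  show "a * b = b * a"
    by transfer (auto intro!: locrel_eqI locA_mult simp: locrel_def algebra_simps)
  show "1 * a = a"
    by transfer (auto intro!: locrel_eqI locA_mult simp: locrel_def algebra_simps)
  show "(a + b) * c = a * c + b * c"
    by transfer (auto intro!: locrel_eqI locA_mult simp: locrel_def algebra_simps)
  show "a + b + c = a + (b + c)"
    by transfer (auto intro!: locrel_eqI locA_mult simp: locrel_def algebra_simps)
  show "a + b = b + a"
    by transfer (auto intro!: locrel_eqI locA_mult simp: locrel_def algebra_simps)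
  show "0 + a = a"
    by transfer (auto intro!: locrel_eqI locA_mult simp: locrel_def algebra_simps)
  show "- a + a = 0"
    by transfer (auto intro!: locrel_eqI locA_mult locA_1 simp: locrel_def algebra_simps)
  show "a - b = a + - b"
    by (simp add: minus_loc_def)
  show "(0::'a loc) \<noteq> 1"
    by transfer (auto simp: locrel_def locA_def)
qed

end

end

theory Submission
  imports Defs
begin

lift_definition ev0 :: "'a::comm_ring_1 loc \<Rightarrow> 'a" is "\<lambda>(f, s). poly f 0"
proof -
  fix x y :: "'a poly \<times> 'a poly"
  assume "locrel x y"
  then obtain u where "snd x \<in> locA" "snd y \<in> locA" "u \<in> locA"
    "u * (fst x * snd y - fst y * snd x) = 0" unfolding locrel_def by auto
  then have "poly (u * (fst x * snd y - fst y * snd x)) 0 = 0" by simp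
  then have "poly (fst x) 0 = poly (fst y) 0"
    using \<open>snd x \<in> locA\<close> \<open>snd y \<in> locA\<close> \<open>u \<in> locA\<close> by (simp add: locA_def)
  then show "(case x of (f, s) \<Rightarrow> poly f 0) = (case y of (f, s) \<Rightarrow> poly f 0)"
    by (cases x; cases y) simp
qed

lift_definition emb :: "'a::comm_ring_1 \<Rightarrow> 'a loc" is "\<lambda>a. ([:a:], 1)"
  by (rule locrel_refl[OF locA_1])

lemma ev0_add: "ev0 (x + y) = ev0 x + ev0 y"
  by transfer (auto simp: locrel_def locA_def)

lemma ev0_mult: "ev0 (x * y) = ev0 x * ev0 y"
  by transfer (auto simp: locrel_def locA_def)

lemma ev0_zero: "ev0 0 = 0"
  by transfer auto

lemma ev0_emb: "ev0 (emb a) = a"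
  by transfer auto

lemma ev0_sum: "ev0 (sum f A) = (\<Sum>i\<in>A. ev0 (f i))"
  by (induction A rule: infinite_finite_induct) (auto simp: ev0_zero ev0_add)

lemma emb_add: "emb (a + b) = emb a + emb b"
  by transfer (auto intro!: locrel_eqI locA_1 simp: locA_1)

lemma emb_mult: "emb (a * b) = emb a * emb b"
  by transfer (auto intro!: locrel_eqI locA_1 simp: locA_1)

lemma emb_zero: "emb 0 = 0"
  by transfer (auto intro!: locrel_eqI locA_1 simp: locA_1)

lemma emb_sum: "emb (sum f A) = (\<Sum>i\<in>A. emb (f i))"
  by (induction A rule: infinite_finite_induct) (auto simp: emb_zero emb_add)

definition spn :: "nat \<Rightarrow> (nat \<Rightarrow> 'a::comm_ring_1) \<Rightarrow> 'a set" where
  "spn n g = {\<Sum>i<n. r i * g i | r. True}"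

lemma spnI: "x = (\<Sum>i<n. r i * g i) \<Longrightarrow> x \<in> spn n g"
  unfolding spn_def by blast

lemma gen_in_spn: "j < n \<Longrightarrow> g j \<in> spn n g"
proof -
  assume j: "j < n"
  have "(\<Sum>i<n. (if i = j then 1 else 0) * g i) = (\<Sum>i<n. (if i = j then g i else 0))"
    by (rule sum.cong) auto
  also have "\<dots> = g j" using j by simp
  finally have "(\<Sum>i<n. (if i = j then 1 else 0) * g i) = g j" .
  then show ?thesis by (metis spnI)
qed

lemma spn_mono:
  assumes "\<And>i. i < n \<Longrightarrow> g i \<in> spn n h"
  shows "spn n g \<subseteq> spn n h"
proof
  fix x assume "x \<in> spn n g"
  then obtain r where x: "x = (\<Sum>i<n. r i * g i)" unfolding spn_def by auto
  have "\<forall>i. \<exists>c. i < n \<longrightarrow> g i = (\<Sum>j<n. c j * h j)"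
    using assms unfolding spn_def by blast
  then obtain c where c: "\<And>i. i < n \<Longrightarrow> g i = (\<Sum>j<n. c i j * h j)" by metis
  have "x = (\<Sum>i<n. r i * (\<Sum>j<n. c i j * h j))" unfolding x using c by simp
  also have "\<dots> = (\<Sum>i<n. \<Sum>j<n. r i * c i j * h j)"
    by (simp add: sum_distrib_left mult.assoc)
  also have "\<dots> = (\<Sum>j<n. \<Sum>i<n. r i * c i j * h j)" by (rule sum.swap)
  also have "\<dots> = (\<Sum>j<n. (\<Sum>i<n. r i * c i j) * h j)"
    by (simp add: sum_distrib_right)
  finally show "x \<in> spn n h" by (rule spnI)
qed

lemma emb_spn: "x \<in> spn n g \<Longrightarrow> emb x \<in> spn n (\<lambda>i. emb (g i))"
  unfolding spn_def by (auto simp: emb_sum emb_mult)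

lemma ev0_spn: "emb x \<in> spn n (\<lambda>i. emb (g i)) \<Longrightarrow> x \<in> spn n g"
proof -
  assume "emb x \<in> spn n (\<lambda>i. emb (g i))"
  then obtain r where "emb x = (\<Sum>i<n. r i * emb (g i))" unfolding spn_def by auto
  then have "ev0 (emb x) = (\<Sum>i<n. ev0 (r i) * g i)"
    by (simp add: ev0_sum ev0_mult ev0_emb)
  then show ?thesis unfolding ev0_emb by (rule spnI)
qed

theorem mainTheorem4:
  fixes n :: nat
  assumes "n > 0"
    and "n_acc n TYPE('a::comm_ring_1 loc)"
  shows "n_acc n TYPE('a)"
  unfolding n_acc_def
proof (intro allI impI, elim conjE)
  fix I :: "nat \<Rightarrow> 'a set"
  assume gen: "\<forall>k. n_generated_ideal n (I k)" and ch: "\<forall>k. I k \<subseteq> I (Suc k)"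
  have "\<forall>k. \<exists>g. I k = spn n g" using gen unfolding n_generated_ideal_def spn_def by simp
  then have "\<exists>G. \<forall>k. I k = spn n (G k)" by (rule choice)
  then obtain G where G0: "\<forall>k. I k = spn n (G k)" ..
  have G: "I k = spn n (G k)" for k using G0 by (rule spec)
  define J where "J k = spn n (\<lambda>i. emb (G k i))" for k
  have Jgen1: "n_generated_ideal n (J k)" for k
    unfolding J_def n_generated_ideal_def spn_def by (rule exI[of _ "\<lambda>i. emb (G k i)"]) (rule refl)
  have Jgen: "\<forall>k. n_generated_ideal n (J k)" using Jgen1 by blast
  have Jch: "\<forall>k. J k \<subseteq> J (Suc k)"
  proof
    fix k
    show "J k \<subseteq> J (Suc k)" unfolding J_def
    proof (rule spn_mono)
      fix i assume "i < n"
      then have "G k i \<in> I k" using gen_in_spn[OF \<open>i < n\<close>, of "G k"] G[of k] by simp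
      then have "G k i \<in> spn n (G (Suc k))" using ch G[of k] G[of "Suc k"] by blast
      then show "emb (G k i) \<in> spn n (\<lambda>i. emb (G (Suc k) i))" by (rule emb_spn)
    qed
  qed
  from assms(2) Jgen Jch obtain N where N: "\<forall>m\<ge>N. J m = J N"
    unfolding n_acc_def by blast
  have mono: "I a \<subseteq> I b" if "a \<le> b" for a b
    using lift_Suc_mono_le[of I, OF _ that] ch by blast
  show "\<exists>N. \<forall>m\<ge>N. I m = I N"
  proof (intro exI allI impI)
    fix m assume m: "N \<le> m"
    have "I m \<subseteq> I N"
    proof
      fix x assume "x \<in> I m"
      then have "emb x \<in> J m" unfolding J_def G by (rule emb_spn)
      then have "emb x \<in> J N" using N[rule_format, OF m] by (simp only:)
      then show "x \<in> I N" unfolding J_def G by (rule ev0_spn)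
    qed
    then show "I m = I N" using mono[OF m] by blast
  qed
qed

end
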